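(* Let $n\in\{6,10,12\}$ and $V_0=\{v\in\{-1,1\}^n : v_1=1,\ \sum_i v_i=0\}$. Then there exist signs $\varepsilon_v\in\{-1,1\}$, $v\in V_0$, such that $\sum_{v\in V_0}\varepsilon_v v=0$. *)

theory Defs
  imports Main
begin

text \<open>Vectors in {-1,1}^n are represented as functions nat => int on the index
set {0..<n} (coordinate i+1 of the paper is value at i), extended by 0 outside.\<close>

definition sign_vectors :: "nat \<Rightarrow> (nat \<Rightarrow> int) set" where
  "sign_vectors n = {v. (\<forall>i<n. v i = 1 \<or> v i = -1) \<and> (\<forall>i\<ge>n. v i = 0)}"

definition V0 :: "nat \<Rightarrow> (nat \<Rightarrow> int) set" where
  "V0 n = {v \<in> sign_vectors n. v 0 = 1 \<and> (\<Sum>i<n. v i) = 0}"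

end

theory Submission
  imports Defs
begin

fun gen :: "nat \<Rightarrow> nat \<Rightarrow> int list list" where
  "gen 0 k = (if k = 0 then [[]] else [])"
| "gen (Suc m) k = (if k > 0 then map (Cons 1) (gen m (k - 1)) else []) @ map (Cons (-1)) (gen m k)"

definition pm :: "int list \<Rightarrow> bool" where
  "pm xs = (\<forall>x\<in>set xs. x = 1 \<or> x = -1)"

definition ones :: "int list \<Rightarrow> nat" where
  "ones xs = length (filter (\<lambda>x. x = 1) xs)"

lemma gen_set: "xs \<in> set (gen m k) \<longleftrightarrow> length xs = m \<and> pm xs \<and> ones xs = k"
proof (induction m arbitrary: k xs)
  case 0
  then show ?case by (auto simp: pm_def ones_def)
next
  case (Suc m)
  show ?case
  proof (cases xs)
    case Nil
    then show ?thesis by auto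
  next
    case (Cons a ys)
    then show ?thesis using Suc
      by (cases "k") (auto simp: pm_def ones_def)
  qed
qed

lemma gen_distinct: "distinct (gen m k)"
  by (induction m arbitrary: k) (auto simp: distinct_map)

lemma sum_pm: "pm xs \<Longrightarrow> sum_list xs = 2 * int (ones xs) - int (length xs)"
  by (induction xs) (auto simp: pm_def ones_def)

definition enc :: "nat \<Rightarrow> int list \<Rightarrow> nat \<Rightarrow> int" where
  "enc n xs = (\<lambda>i. if i < n then xs ! i else 0)"

lemma sum_enc: "length xs = n \<Longrightarrow> (\<Sum>i<n. enc n xs i) = sum_list xs"
proof -
  assume l: "length xs = n"
  have "(\<Sum>i<n. enc n xs i) = (\<Sum>i<n. xs ! i)" by (simp add: enc_def)
  also have "\<dots> = sum_list xs" using l by (simp add: sum_list_sum_nth atLeast0LessThan)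
  finally show ?thesis .
qed

lemma V0_eq:
  assumes "even n" "n \<ge> 2"
  shows "V0 n = enc n ` set (map (Cons 1) (gen (n - 1) (n div 2 - 1)))"
proof
  show "V0 n \<subseteq> enc n ` set (map (Cons 1) (gen (n - 1) (n div 2 - 1)))"
  proof
    fix v assume v: "v \<in> V0 n"
    define xs where "xs = map v [0..<n]"
    have e: "enc n xs = v"
      using v by (auto simp: enc_def xs_def V0_def sign_vectors_def)
    have xs1: "xs = v 0 # map v [1..<n]" using assms by (simp add: xs_def upt_conv_Cons)
    have pmx: "pm xs" using v by (auto simp: pm_def xs_def V0_def sign_vectors_def)
    have s0: "sum_list xs = 0"
      using sum_enc[of xs n] e v by (simp add: xs_def V0_def)
    define ys where "ys = map v [1..<n]"
    have pmy: "pm ys" using pmx xs1 by (simp add: pm_def ys_def)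
    have v0: "v 0 = 1" using v by (simp add: V0_def)
    have "sum_list ys = -1" using s0 xs1 v0 by (simp add: ys_def)
    then have "2 * int (ones ys) - int (n - 1) = -1" using sum_pm[OF pmy] by (simp add: ys_def)
    then have "ones ys = n div 2 - 1" using assms by (auto elim!: evenE)
    then have "ys \<in> set (gen (n - 1) (n div 2 - 1))" using pmy by (simp add: gen_set ys_def)
    then have "1 # ys \<in> set (map (Cons 1) (gen (n - 1) (n div 2 - 1)))" by simp
    moreover have "v = enc n (1 # ys)" using e xs1 v0 by (simp add: ys_def)
    ultimately show "v \<in> enc n ` set (map (Cons 1) (gen (n - 1) (n div 2 - 1)))" by blast
  qed
next
  show "enc n ` set (map (Cons 1) (gen (n - 1) (n div 2 - 1))) \<subseteq> V0 n"
  proof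
    fix v assume "v \<in> enc n ` set (map (Cons 1) (gen (n - 1) (n div 2 - 1)))"
    then obtain ys where ys: "ys \<in> set (gen (n - 1) (n div 2 - 1))" and v: "v = enc n (1 # ys)" by auto
    have l: "length ys = n - 1" "pm ys" "ones ys = n div 2 - 1" using ys by (auto simp: gen_set)
    have "sum_list ys = -1" using sum_pm[OF l(2)] l assms by (auto elim!: evenE)
    then have "(\<Sum>i<n. v i) = 0" using sum_enc[of "1 # ys" n] l assms v by simp
    moreover have "v \<in> sign_vectors n"
    proof -
      have "\<forall>i<n. (1 # ys) ! i = 1 \<or> (1 # ys) ! i = -1"
      proof (intro allI impI)
        fix i assume "i < n"
        then have "i < length (1 # ys)" using l assms by simp
        then have "(1 # ys) ! i \<in> set (1 # ys)" by (rule nth_mem)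
        then show "(1 # ys) ! i = 1 \<or> (1 # ys) ! i = -1" using l(2) by (auto simp: pm_def)
      qed
      then show ?thesis by (simp add: v sign_vectors_def enc_def)
    qed
    moreover have "v 0 = 1" using v assms by (simp add: enc_def)
    ultimately show "v \<in> V0 n" by (simp add: V0_def)
  qed
qed

lemma inj_enc: "inj_on (enc n) {xs. length xs = n}"
proof (rule inj_onI)
  fix x y assume x: "x \<in> {xs. length xs = n}" and y: "y \<in> {xs. length xs = n}" and e: "enc n x = enc n y"
  show "x = y"
  proof (rule nth_equalityI)
    show "length x = length y" using x y by simp
    fix i assume "i < length x"
    then show "x ! i = y ! i" using fun_cong[OF e, of i] x by (simp add: enc_def)
  qed
qed

lemma main:
  assumes "even n" "n \<ge> 2"
    and L: "L = map (Cons 1) (gen (n - 1) (n div 2 - 1))"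
    and len: "length ss = length L"
    and sg: "list_all (\<lambda>s. s = 1 \<or> s = -1) ss"
    and chk: "list_all (\<lambda>i. sum_list (map (\<lambda>(s, xs). s * xs ! i) (zip ss L)) = 0) [0..<n]"
  shows "\<exists>\<epsilon> :: (nat \<Rightarrow> int) \<Rightarrow> int.
           (\<forall>v\<in>V0 n. \<epsilon> v = 1 \<or> \<epsilon> v = -1) \<and>
           (\<forall>i<n. (\<Sum>v\<in>V0 n. \<epsilon> v * v i) = 0)"
proof -
  have V: "V0 n = enc n ` set L" using V0_eq[OF assms(1,2)] L by simp
  have dL: "distinct L" using L by (simp add: distinct_map gen_distinct)
  have lenL: "\<And>xs. xs \<in> set L \<Longrightarrow> length xs = n" using L assms by (auto simp: gen_set)
  have inj: "inj_on (enc n) (set L)"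
    by (rule inj_on_subset[OF inj_enc]) (auto simp: lenL)
  define \<epsilon> where "\<epsilon> v = (if \<exists>j<length L. enc n (L ! j) = v
      then ss ! (THE j. j < length L \<and> enc n (L ! j) = v) else 1)" for v
  have eps: "\<epsilon> (enc n (L ! j)) = ss ! j" if j: "j < length L" for j
  proof -
    have "(THE j'. j' < length L \<and> enc n (L ! j') = enc n (L ! j)) = j"
    proof (rule the_equality)
      fix j' assume "j' < length L \<and> enc n (L ! j') = enc n (L ! j)"
      then have "L ! j' = L ! j" using inj j by (auto dest: inj_onD)
      then show "j' = j" using dL j \<open>j' < length L \<and> _\<close> by (simp add: nth_eq_iff_index_eq)
    qed (use j in auto)
    then show ?thesis using j by (auto simp: \<epsilon>_def)
  qed
  show ?thesis
  proof (intro exI conjI ballI allI impI)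
    fix v assume "v \<in> V0 n"
    then obtain j where j: "j < length L" "v = enc n (L ! j)" using V by (auto simp: in_set_conv_nth)
    then show "\<epsilon> v = 1 \<or> \<epsilon> v = -1" using eps sg len by (auto simp: list_all_length)
  next
    fix i assume i: "i < n"
    have "(\<Sum>v\<in>V0 n. \<epsilon> v * v i) = (\<Sum>xs\<in>set L. \<epsilon> (enc n xs) * enc n xs i)"
      unfolding V by (simp add: sum.reindex[OF inj])
    also have "\<dots> = sum_list (map (\<lambda>xs. \<epsilon> (enc n xs) * enc n xs i) L)"
      using dL by (simp add: sum_list_distinct_conv_sum_set)
    also have "map (\<lambda>xs. \<epsilon> (enc n xs) * enc n xs i) L = map (\<lambda>(s, xs). s * xs ! i) (zip ss L)"
    proof (rule nth_equalityI)
      show "length (map (\<lambda>xs. \<epsilon> (enc n xs) * enc n xs i) L) = length (map (\<lambda>(s, xs). s * xs ! i) (zip ss L))"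
        using len by simp
      fix j assume "j < length (map (\<lambda>xs. \<epsilon> (enc n xs) * enc n xs i) L)"
      then have j: "j < length L" by simp
      have "enc n (L ! j) i = L ! j ! i" using i by (simp add: enc_def)
      then show "map (\<lambda>xs. \<epsilon> (enc n xs) * enc n xs i) L ! j = map (\<lambda>(s, xs). s * xs ! i) (zip ss L) ! j"
        using j len eps[OF j] by simp
    qed
    also have "sum_list \<dots> = 0" using chk i by (simp add: list_all_iff)
    finally show "(\<Sum>v\<in>V0 n. \<epsilon> v * v i) = 0" .
  qed
qed

lemma case6: "\<exists>\<epsilon> :: (nat \<Rightarrow> int) \<Rightarrow> int.
           (\<forall>v\<in>V0 6. \<epsilon> v = 1 \<or> \<epsilon> v = -1) \<and>
           (\<forall>i<6. (\<Sum>v\<in>V0 6. \<epsilon> v * v i) = 0)"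
  by (rule main[where ss = "[1, 1, -1, -1, -1, -1, 1, 1, -1, 1]", OF _ _ refl]) code_simp+

lemma case10: "\<exists>\<epsilon> :: (nat \<Rightarrow> int) \<Rightarrow> int.
           (\<forall>v\<in>V0 10. \<epsilon> v = 1 \<or> \<epsilon> v = -1) \<and>
           (\<forall>i<10. (\<Sum>v\<in>V0 10. \<epsilon> v * v i) = 0)"
  by (rule main[where ss = "[1, 1, -1, 1, 1, 1, 1, 1, 1, -1, -1, 1, -1, -1, 1, -1, -1, 1, -1, -1, 1, 1, -1, -1, -1, 1, -1, 1, -1, -1, -1, 1, -1, 1, -1, 1, 1, -1, -1, 1, -1, -1, -1, 1, -1, 1, 1, 1, -1, 1, -1, 1, -1, 1, -1, 1, 1, 1, -1, -1, -1, 1, -1, 1, 1, -1, -1, 1, 1, -1, 1, -1, -1, 1, -1, 1, -1, -1, 1, 1, -1, 1, -1, -1, -1, -1, -1, 1, 1, 1, -1, -1, -1, 1, 1, 1, -1, 1, 1, -1, -1, -1, -1, -1, -1, 1, 1, 1, 1, -1, -1, 1, -1, 1, 1, -1, -1, 1, 1, 1, 1, 1, 1, 1, -1, -1]", OF _ _ refl]) code_simp+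

lemma case12: "\<exists>\<epsilon> :: (nat \<Rightarrow> int) \<Rightarrow> int.
           (\<forall>v\<in>V0 12. \<epsilon> v = 1 \<or> \<epsilon> v = -1) \<and>
           (\<forall>i<12. (\<Sum>v\<in>V0 12. \<epsilon> v * v i) = 0)"
  by (rule main[where ss = "[1, 1, 1, 1, -1, -1, 1, -1, 1, -1, 1, 1, -1, -1, -1, -1, 1, 1, -1, -1, 1, 1, 1, -1, -1, 1, 1, 1, 1, -1, 1, -1, -1, 1, 1, 1, 1, -1, -1, -1, -1, 1, 1, -1, -1, 1, -1, -1, 1, -1, 1, -1, 1, -1, 1, 1, -1, -1, 1, 1, 1, -1, -1, -1, -1, 1, -1, -1, 1, -1, -1, -1, -1, 1, 1, -1, -1, -1, -1, 1, 1, -1, -1, 1, 1, -1, -1, -1, -1, 1, -1, 1, -1, -1, -1, 1, -1, -1, -1, -1, -1, -1, 1, -1, 1, 1, 1, 1, 1, -1, -1, 1, 1, -1, -1, 1, 1, 1, -1, 1, -1, -1, -1, -1, 1, 1, -1, -1, 1, 1, 1, 1, -1, -1, -1, 1, 1, -1, 1, -1, 1, 1, -1, 1, 1, -1, 1, 1, -1, 1, -1, -1, 1, 1, -1, 1, 1, 1, -1, 1, -1, -1, 1, 1, -1, -1, 1, 1, -1, 1, 1, 1, 1, -1, -1, -1, 1, 1, 1, 1, -1, 1, 1, 1, 1, 1, -1, 1, 1, -1, -1, -1, 1, 1, -1, -1, -1, -1, -1, 1, -1, -1, 1, 1, 1, -1, 1, 1, -1, -1, 1, -1, 1, -1, -1,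 1, -1, -1, -1, 1, 1, 1, 1, 1, -1, 1, -1, -1, 1, -1, 1, 1, -1, -1, -1, 1, -1, -1, 1, 1, 1, -1, -1, -1, 1, 1, 1, -1, 1, 1, -1, -1, -1, -1, 1, 1, 1, -1, -1, 1, -1, 1, 1, 1, 1, 1, 1, -1, 1, -1, -1, -1, -1, -1, 1, -1, -1, -1, 1, 1, 1, 1, -1, 1, -1, -1, 1, 1, 1, -1, -1, 1, -1, -1, 1, -1, 1, 1, 1, 1, -1, 1, -1, 1, -1, 1, 1, 1, 1, 1, -1, 1, 1, 1, 1, 1, -1, -1, -1, -1, -1, -1, -1, -1, 1, 1, -1, -1, -1, 1, -1, 1, 1, 1, -1, -1, 1, 1, -1, 1, 1, -1, -1, -1, 1, -1, 1, 1, -1, -1, -1, -1, 1, -1, -1, -1, 1, 1, 1, 1, -1, 1, 1, 1, 1, 1, -1, -1, 1, -1, -1, 1, -1, -1, -1, -1, -1, 1, 1, -1, -1, 1, -1, 1, -1, -1, -1, 1, 1, -1, -1, 1, 1, -1, -1, -1, 1, 1, 1, -1, 1, 1, -1, 1, 1, -1, 1, -1, -1, -1, -1, 1, -1, 1, -1, 1, 1, -1, 1, -1, -1, 1, -1, -1, -1, 1, 1, -1, 1, -1, 1, 1, -1, 1, -1, 1, -1, 1, 1, 1, -1, -1, -1, -1, -1, -1, 1, 1, -1, -1, 1, 1, 1, 1, 1, -1, 1, 1, -1, 1, -1, -1]", OF _ _ refl]) code_simp+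

theorem lemmaA1:
  fixes n :: nat
  assumes "n \<in> {6, 10, 12}"
  shows "\<exists>\<epsilon> :: (nat \<Rightarrow> int) \<Rightarrow> int.
           (\<forall>v\<in>V0 n. \<epsilon> v = 1 \<or> \<epsilon> v = -1) \<and>
           (\<forall>i<n. (\<Sum>v\<in>V0 n. \<epsilon> v * v i) = 0)"
  using assms case6 case10 case12 by auto

end
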